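(* Let $\mathcal{X}$ be $\mathbb{E}^2$ or $\mathbb{H}^2$ and let $M$ be a locally-finite map in $\mathcal{X}$ with exactly one end such that $V(M)$ is a locally finite collection of vertices. Suppose $G\le\mathrm{Isom}(\mathcal{X})$ acts quasi-transitively on $M$. Then $G$ is a discrete group of isometries of $\mathcal{X}$.
   Context: A map $M$ in a surface $X$ is a (simple, connected, infinite) graph embedded in $X$: vertices are distinct points, edges are curves meeting only at common endpoints, and each face (component of the complement) is homeomorphic to an open disc. $M$ is locally-finite / has one end if its underlying graph does (ends = equivalence classes of rays, two rays equivalent if joined by infinitely many disjoint paths). $V(M)$ is a locally finite collection of vertices if every compact subset of $\mathcal{X}$ contains only finitely many vertices of $M$. A group $G\le\mathrm{Isom}(\mathcal{X})$ acts on $M$ if each $g\in G$ maps $M$ to itself with $g(V(M))=V(M)$ inducing a graph automorphism; it acts quasi-transitively if it has finitely many orbits on $V(M)$. *)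

theory Defs
  imports "HOL-Analysis.Analysis"
begin

text \<open>E^2 is modelled as the complex plane with the Euclidean metric; H^2 is modelled
as the Poincare disc (open unit disc in the complex plane) with the hyperbolic metric.
In both cases the metric topology coincides with the Euclidean (subspace) topology,
so topological notions (compactness, arcs, components, homeomorphism) are taken from
the ambient complex plane.\<close>

datatype geometry = Euclidean | Hyperbolic

definition hyp_dist :: "complex \<Rightarrow> complex \<Rightarrow> real" where
  "hyp_dist z w = arcosh (1 + 2 * (cmod (z - w))\<^sup>2 / ((1 - (cmod z)\<^sup>2) * (1 - (cmod w)\<^sup>2)))"

fun space :: "geometry \<Rightarrow> complex set" where
  "space Euclidean = UNIV"
| "space Hyperbolic = ball 0 1"

fun gdist :: "geometry \<Rightarrow> complex \<Rightarrow> complex \<Rightarrow> real" where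
  "gdist Euclidean z w = dist z w"
| "gdist Hyperbolic z w = hyp_dist z w"

text \<open>An isometry of X: a distance-preserving bijection of the space, taken to be the
identity outside the space (so that isometries are determined by their action on X).\<close>
definition isometry :: "geometry \<Rightarrow> (complex \<Rightarrow> complex) \<Rightarrow> bool" where
  "isometry X g \<longleftrightarrow> bij_betw g (space X) (space X)
     \<and> (\<forall>x\<in>space X. \<forall>y\<in>space X. gdist X (g x) (g y) = gdist X x y)
     \<and> (\<forall>x. x \<notin> space X \<longrightarrow> g x = x)"

definition isom_subgroup :: "geometry \<Rightarrow> (complex \<Rightarrow> complex) set \<Rightarrow> bool" where
  "isom_subgroup X G \<longleftrightarrow> (\<forall>g\<in>G. isometry X g) \<and> id \<in> G
     \<and> (\<forall>g\<in>G. \<forall>h\<in>G. g \<circ> h \<in> G)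
     \<and> (\<forall>g\<in>G. \<exists>h\<in>G. h \<circ> g = id)"

text \<open>Discreteness of G as a subset of Isom(X) with the compact-open topology
(= topology of uniform convergence on compact sets): every element g of G has a
basic neighbourhood {h. sup over K of d(h x, g x) < e} meeting G only in g.\<close>
definition discrete_isom_group :: "geometry \<Rightarrow> (complex \<Rightarrow> complex) set \<Rightarrow> bool" where
  "discrete_isom_group X G \<longleftrightarrow>
     (\<forall>g\<in>G. \<exists>K e. compact K \<and> K \<subseteq> space X \<and> e > 0 \<and>
        (\<forall>h\<in>G. (\<forall>x\<in>K. gdist X (h x) (g x) < e) \<longrightarrow> h = g))"

definition is_edge_curve :: "geometry \<Rightarrow> complex set \<Rightarrow> complex set \<Rightarrow> bool" where
  "is_edge_curve X V C \<longleftrightarrow> (\<exists>\<gamma>. arc \<gamma> \<and> path_image \<gamma> = C \<and> C \<subseteq> space X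
      \<and> pathstart \<gamma> \<in> V \<and> pathfinish \<gamma> \<in> V
      \<and> C \<inter> V = {pathstart \<gamma>, pathfinish \<gamma>})"

definition map_adj :: "complex set \<Rightarrow> complex set set \<Rightarrow> complex \<Rightarrow> complex \<Rightarrow> bool" where
  "map_adj V E u v \<longleftrightarrow> u \<noteq> v \<and> (\<exists>C\<in>E. C \<inter> V = {u, v})"

definition is_map :: "geometry \<Rightarrow> complex set \<Rightarrow> complex set set \<Rightarrow> bool" where
  "is_map X V E \<longleftrightarrow>
     V \<subseteq> space X
   \<and> (\<forall>C\<in>E. is_edge_curve X V C)
   \<and> (\<forall>C\<in>E. \<forall>C'\<in>E. C \<noteq> C' \<longrightarrow> C \<inter> C' \<subseteq> V)
   \<and> (\<forall>C\<in>E. \<forall>C'\<in>E. C \<noteq> C' \<longrightarrow> C \<inter> V \<noteq> C' \<inter> V)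
   \<and> infinite V
   \<and> (\<forall>u\<in>V. \<forall>v\<in>V. (map_adj V E)\<^sup>*\<^sup>* u v)
   \<and> (\<forall>F \<in> components (space X - (V \<union> \<Union>E)). F homeomorphic ball (0::complex) 1)"

definition locally_finite_graph :: "complex set \<Rightarrow> complex set set \<Rightarrow> bool" where
  "locally_finite_graph V E \<longleftrightarrow> (\<forall>v\<in>V. finite {w. map_adj V E v w})"

definition graph_ray :: "complex set \<Rightarrow> complex set set \<Rightarrow> (nat \<Rightarrow> complex) \<Rightarrow> bool" where
  "graph_ray V E r \<longleftrightarrow> inj r \<and> range r \<subseteq> V \<and> (\<forall>n. map_adj V E (r n) (r (Suc n)))"

definition graph_path :: "complex set \<Rightarrow> complex set set \<Rightarrow> complex list \<Rightarrow> bool" where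
  "graph_path V E p \<longleftrightarrow> p \<noteq> [] \<and> distinct p \<and> set p \<subseteq> V
     \<and> (\<forall>i. Suc i < length p \<longrightarrow> map_adj V E (p ! i) (p ! Suc i))"

definition rays_equiv :: "complex set \<Rightarrow> complex set set \<Rightarrow> (nat \<Rightarrow> complex) \<Rightarrow> (nat \<Rightarrow> complex) \<Rightarrow> bool" where
  "rays_equiv V E r1 r2 \<longleftrightarrow> (\<exists>P. infinite P
      \<and> (\<forall>p\<in>P. graph_path V E p \<and> hd p \<in> range r1 \<and> last p \<in> range r2)
      \<and> (\<forall>p\<in>P. \<forall>q\<in>P. p \<noteq> q \<longrightarrow> set p \<inter> set q = {}))"

definition one_ended :: "complex set \<Rightarrow> complex set set \<Rightarrow> bool" where
  "one_ended V E \<longleftrightarrow> (\<exists>r. graph_ray V E r)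
     \<and> (\<forall>r1 r2. graph_ray V E r1 \<longrightarrow> graph_ray V E r2 \<longrightarrow> rays_equiv V E r1 r2)"

definition locally_finite_vertices :: "geometry \<Rightarrow> complex set \<Rightarrow> bool" where
  "locally_finite_vertices X V \<longleftrightarrow> (\<forall>K. compact K \<and> K \<subseteq> space X \<longrightarrow> finite (K \<inter> V))"

definition acts_on_map :: "(complex \<Rightarrow> complex) set \<Rightarrow> complex set \<Rightarrow> complex set set \<Rightarrow> bool" where
  "acts_on_map G V E \<longleftrightarrow> (\<forall>g\<in>G. g ` V = V \<and> (\<lambda>C. g ` C) ` E = E)"

definition quasi_transitive :: "(complex \<Rightarrow> complex) set \<Rightarrow> complex set \<Rightarrow> complex set set \<Rightarrow> bool" where
  "quasi_transitive G V E \<longleftrightarrow> acts_on_map G V E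
     \<and> finite ((\<lambda>v. (\<lambda>g. g v) ` G) ` V)"

end

theory Submission imports Defs begin

type_synonym v3 = "real \<times> real \<times> real"

fun dot3 :: "v3 \<Rightarrow> v3 \<Rightarrow> real" where
  "dot3 (a0,a1,a2) (b0,b1,b2) = a0*b0 + a1*b1 + a2*b2"
fun crs3 :: "v3 \<Rightarrow> v3 \<Rightarrow> v3" where
  "crs3 (a0,a1,a2) (b0,b1,b2) = (a1*b2-a2*b1, a2*b0-a0*b2, a0*b1-a1*b0)"
fun sub3 :: "v3 \<Rightarrow> v3 \<Rightarrow> v3" where
  "sub3 (a0,a1,a2) (b0,b1,b2) = (a0-b0, a1-b1, a2-b2)"
fun scl3 :: "real \<Rightarrow> v3 \<Rightarrow> v3" where
  "scl3 t (a0,a1,a2) = (t*a0, t*a1, t*a2)"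

lemma kernel_aux:
  fixes a0 a1 a2 b0 b1 b2 x0 x1 x2 :: real
  assumes "a0*x0+a1*x1+a2*x2 = 0" "b0*x0+b1*x1+b2*x2=0"
  shows "((a1*b2-a2*b1)^2+(a2*b0-a0*b2)^2+(a0*b1-a1*b0)^2)*x0 = ((a1*b2-a2*b1)*x0+(a2*b0-a0*b2)*x1+(a0*b1-a1*b0)*x2)*(a1*b2-a2*b1)"
    and "((a1*b2-a2*b1)^2+(a2*b0-a0*b2)^2+(a0*b1-a1*b0)^2)*x1 = ((a1*b2-a2*b1)*x0+(a2*b0-a0*b2)*x1+(a0*b1-a1*b0)*x2)*(a2*b0-a0*b2)"
    and "((a1*b2-a2*b1)^2+(a2*b0-a0*b2)^2+(a0*b1-a1*b0)^2)*x2 = ((a1*b2-a2*b1)*x0+(a2*b0-a0*b2)*x1+(a0*b1-a1*b0)*x2)*(a0*b1-a1*b0)"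
  using assms by algebra+

lemma kernel:
  assumes "dot3 a x = 0" "dot3 b x = 0" "crs3 a b \<noteq> (0,0,0)"
  shows "x = scl3 (dot3 (crs3 a b) x / dot3 (crs3 a b) (crs3 a b)) (crs3 a b)"
proof -
  obtain a0 a1 a2 where a: "a = (a0,a1,a2)" by (cases a) auto
  obtain b0 b1 b2 where b: "b = (b0,b1,b2)" by (cases b) auto
  obtain x0 x1 x2 where x: "x = (x0,x1,x2)" by (cases x) auto
  let ?N = "(a1*b2-a2*b1)^2+(a2*b0-a0*b2)^2+(a0*b1-a1*b0)^2"
  have N: "?N \<noteq> 0" using assms(3) unfolding a b by (auto simp: power2_eq_square add_nonneg_eq_0_iff)
  have e1: "a0*x0+a1*x1+a2*x2 = 0" "b0*x0+b1*x1+b2*x2=0" using assms unfolding a b x by auto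
  note k = kernel_aux[OF e1]
  show ?thesis unfolding a b x using N k
    by (simp add: power2_eq_square field_simps)
qed


fun Phi :: "geometry \<Rightarrow> complex \<Rightarrow> v3" where
  "Phi Euclidean z = ((cmod z)^2, Re z, Im z)"
| "Phi Hyperbolic z = (1/(1-(cmod z)^2), Re z/(1-(cmod z)^2), Im z/(1-(cmod z)^2))"

fun Lf :: "geometry \<Rightarrow> complex \<Rightarrow> v3" where
  "Lf Euclidean a = (1, -2*Re a, -2*Im a)"
| "Lf Hyperbolic a = (1+(cmod a)^2, -2*Re a, -2*Im a)"

lemma dot3_sub: "dot3 c (sub3 x y) = dot3 c x - dot3 c y"
  by (cases c; cases x; cases y) (simp add: algebra_simps)

lemma cmod_diff_sq: "(cmod (w - a))^2 = (Re w - Re a)^2 + (Im w - Im a)^2"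
  by (simp add: cmod_power2)

lemma dotE: "dot3 (Lf Euclidean a) (Phi Euclidean w) = (cmod (w-a))^2 - (cmod a)^2"
  by (simp only: cmod_diff_sq cmod_power2 Phi.simps Lf.simps dot3.simps) (simp add: power2_eq_square algebra_simps)

lemma dotH:
  assumes "cmod w < 1"
  shows "dot3 (Lf Hyperbolic a) (Phi Hyperbolic w) = (cmod (w-a))^2/(1-(cmod w)^2) + 1"
proof -
  have s: "1 - (cmod w)^2 > 0" using assms by (simp add: abs_square_less_1)
  define S where "S = 1 - (cmod w)^2"
  have num: "(1 + (cmod a)^2) - 2*Re a*Re w - 2*Im a*Im w = (cmod (w-a))^2 + S"
    unfolding S_def by (simp only: cmod_diff_sq cmod_power2) (simp add: power2_eq_square algebra_simps)
  have "dot3 (Lf Hyperbolic a) (Phi Hyperbolic w) = ((1 + (cmod a)^2) - 2*Re a*Re w - 2*Im a*Im w)/S"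
    unfolding S_def by (simp add: diff_divide_distrib add_divide_distrib)
  also have "\<dots> = (cmod (w-a))^2/S + 1" using s unfolding num S_def by (simp add: field_simps)
  finally show ?thesis unfolding S_def .
qed

lemma arcosh_inj:
  assumes "x \<ge> 1" "y \<ge> 1" "arcosh x = arcosh (y::real)" shows "x = y"
  using arcosh_less_iff_real[of x y] arcosh_less_iff_real[of y x] assms by (auto simp del: arcosh_less_iff_real)

lemma div_aux: "(c::real) \<noteq> 0 \<Longrightarrow> p \<noteq> 0 \<Longrightarrow> q \<noteq> 0 \<Longrightarrow> 1 + 2*x/(p*c) = 1 + 2*y/(q*c) \<Longrightarrow> x/p = y/q"
  by (simp add: field_simps)

lemma P1:
  assumes "a \<in> space X" "z \<in> space X" "w \<in> space X" "gdist X w a = gdist X z a"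
  shows "dot3 (Lf X a) (sub3 (Phi X w) (Phi X z)) = 0"
proof (cases X)
  case Euclidean
  then have "cmod (w-a) = cmod (z-a)" using assms by (simp add: dist_norm)
  then show ?thesis using Euclidean by (simp only: dot3_sub dotE)
next
  case Hyperbolic
  have w: "cmod w < 1" and z: "cmod z < 1" and a: "cmod a < 1" using assms Hyperbolic by auto
  have sw: "1 - (cmod w)^2 > 0" using w by (simp add: abs_square_less_1)
  have sz: "1 - (cmod z)^2 > 0" using z by (simp add: abs_square_less_1)
  have sa: "1 - (cmod a)^2 > 0" using a by (simp add: abs_square_less_1)
  have "1 + 2 * (cmod (w - a))\<^sup>2 / ((1 - (cmod w)\<^sup>2) * (1 - (cmod a)\<^sup>2))
      = 1 + 2 * (cmod (z - a))\<^sup>2 / ((1 - (cmod z)\<^sup>2) * (1 - (cmod a)\<^sup>2))"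
    apply (rule arcosh_inj)
    using assms Hyperbolic sw sz sa by (auto simp: hyp_dist_def)
  then have "(cmod (w - a))\<^sup>2 / (1 - (cmod w)\<^sup>2) = (cmod (z - a))\<^sup>2 / (1 - (cmod z)\<^sup>2)"
    by (rule div_aux[rotated 3]) (use sa sw sz in simp_all)
  then show ?thesis unfolding Hyperbolic dot3_sub dotH[OF w] dotH[OF z] by simp
qed

lemma Phi_inj: "inj_on (Phi X) (space X)"
proof (cases X)
  case Euclidean
  then show ?thesis by (auto simp: inj_on_def complex_eq_iff)
next
  case Hyperbolic
  show ?thesis unfolding inj_on_def
  proof (intro ballI impI)
    fix x y assume x: "x \<in> space X" and y: "y \<in> space X" and e: "Phi X x = Phi X y"
    have sx: "1 - (cmod x)^2 > 0" using x Hyperbolic by (simp add: abs_square_less_1)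
    have sy: "1 - (cmod y)^2 > 0" using y Hyperbolic by (simp add: abs_square_less_1)
    from e Hyperbolic have e1: "1/(1-(cmod x)^2) = 1/(1-(cmod y)^2)" 
      and e2: "Re x/(1-(cmod x)^2) = Re y/(1-(cmod y)^2)" and e3: "Im x/(1-(cmod x)^2) = Im y/(1-(cmod y)^2)" by auto
    from e1 have ss: "1-(cmod x)^2 = 1-(cmod y)^2" by simp
    show "x = y" using e2 e3 ss sx by (simp add: complex_eq_iff)
  qed
qed


lemma quad_lineH:
  fixes P0 P1 P2 n0 n1 n2 t :: real
  assumes q: "P0^2 - P1^2 - P2^2 = P0" and l: "(P0+t*n0)^2 - (P1+t*n1)^2 - (P2+t*n2)^2 = P0+t*n0"
    and n: "(n0,n1,n2) \<noteq> (0,0,0)"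
    and t: "t \<noteq> 0"
  shows "t = -(2*(P0*n0 - P1*n1 - P2*n2) - n0)/(n0^2-n1^2-n2^2)"
proof -
  have "t*((n0^2-n1^2-n2^2)*t + (2*(P0*n0-P1*n1-P2*n2) - n0)) = ((P0+t*n0)^2 - (P1+t*n1)^2 - (P2+t*n2)^2 - (P0+t*n0)) - (P0^2 - P1^2 - P2^2 - P0)"
    by (simp add: power2_eq_square algebra_simps)
  then have "t*((n0^2-n1^2-n2^2)*t + (2*(P0*n0-P1*n1-P2*n2) - n0)) = 0"
    using q l by simp
  then have e: "(n0^2-n1^2-n2^2)*t + (2*(P0*n0-P1*n1-P2*n2) - n0) = 0" using t by simp
  show "t = -(2*(P0*n0 - P1*n1 - P2*n2) - n0)/(n0^2-n1^2-n2^2)"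
  proof (cases "n0^2-n1^2-n2^2 = 0")
    case False
    then show ?thesis using e by (simp add: field_simps)
  next
    case True
    then have a: "n0^2 = n1^2+n2^2" by simp
    have b: "n0*(2*P0-1) = 2*(P1*n1+P2*n2)" using e True by (simp add: algebra_simps)
    have cs: "(P1*n1+P2*n2)^2 \<le> (P1^2+P2^2)*(n1^2+n2^2)"
    proof -
      have "(P1^2+P2^2)*(n1^2+n2^2) - (P1*n1+P2*n2)^2 = (P1*n2-P2*n1)^2" by algebra
      then show ?thesis by (metis diff_ge_0_iff_ge zero_le_power2)
    qed
    have "(n0*(2*P0-1))^2 = 4*(P1*n1+P2*n2)^2" unfolding b power_mult_distrib by simp
    also have "\<dots> \<le> 4*((P1^2+P2^2)*(n1^2+n2^2))" using cs by simp
    also have "\<dots> = 4*(P0^2-P0)*n0^2" using a q by (simp add: algebra_simps)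
    finally have "(n0*(2*P0-1))^2 \<le> 4*(P0^2-P0)*n0^2" .
    moreover have "(n0*(2*P0-1))^2 = 4*(P0^2-P0)*n0^2 + n0^2" by algebra
    ultimately have "n0^2 \<le> 0" by simp
    then have "n0 = 0" by simp
    with a have "n1^2+n2^2 = 0" by simp
    then have "n1 = 0" "n2 = 0" by (simp_all add: add_nonneg_eq_0_iff)
    with \<open>n0 = 0\<close> n show ?thesis by simp
  qed
qed

lemma quad_lineE:
  fixes P0 P1 P2 n0 n1 n2 t :: real
  assumes q: "P0 = P1^2 + P2^2" and l: "P0+t*n0 = (P1+t*n1)^2 + (P2+t*n2)^2"
    and n: "(n0,n1,n2) \<noteq> (0,0,0)"
    and t: "t \<noteq> 0"
  shows "t = (n0 - 2*(P1*n1+P2*n2))/(n1^2+n2^2)"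
proof -
  have "t*((n1^2+n2^2)*t + 2*(P1*n1+P2*n2) - n0) = 0"
    using q l by algebra
  then have e: "(n1^2+n2^2)*t + 2*(P1*n1+P2*n2) - n0 = 0" using t by simp
  show "t = (n0 - 2*(P1*n1+P2*n2))/(n1^2+n2^2)"
  proof (cases "n1^2+n2^2 = 0")
    case False
    then show ?thesis using e by (simp add: field_simps)
  next
    case True
    then have "n1 = 0" "n2 = 0" by (simp_all add: add_nonneg_eq_0_iff)
    then have "n0 = 0" using e by simp
    with \<open>n1 = 0\<close> \<open>n2 = 0\<close> n show ?thesis by simp
  qed
qed

lemma quadH:
  assumes "cmod w < 1" "Phi Hyperbolic w = (a,b,c)"
  shows "a^2 - b^2 - c^2 = a"
proof -
  have s: "1 - (cmod w)^2 > 0" using assms by (simp add: abs_square_less_1)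
  define S where "S = 1-(cmod w)^2"
  have abc: "a = 1/S" "b = Re w/S" "c = Im w/S" using assms unfolding S_def by auto
  have "b^2+c^2 = (cmod w)^2/S^2" unfolding abc by (simp add: power_divide cmod_power2 add_divide_distrib)
  moreover have "a^2 = 1/S^2" unfolding abc by (simp add: power_divide)
  ultimately have "a^2 - b^2 - c^2 = (1 - (cmod w)^2)/S^2" by (simp add: diff_divide_distrib)
  also have "\<dots> = 1/S" using s unfolding S_def by (simp add: power2_eq_square)
  finally show ?thesis using abc by simp
qed

lemma quadE:
  assumes "Phi Euclidean w = (a,b,c)"
  shows "a = b^2 + c^2"
  using assms by (auto simp: cmod_power2)

lemma finite_line:
  assumes n: "n \<noteq> (0,0,0)" and p: "p \<in> space X"
  shows "finite {t. \<exists>w\<in>space X. sub3 (Phi X w) (Phi X p) = scl3 t n}"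
proof -
  obtain n0 n1 n2 where nn: "n = (n0,n1,n2)" by (cases n) auto
  obtain P0 P1 P2 where PP: "Phi X p = (P0,P1,P2)" by (cases "Phi X p") auto
  define c where "c = (if X = Euclidean then (n0 - 2*(P1*n1+P2*n2))/(n1^2+n2^2)
     else -(2*(P0*n0 - P1*n1 - P2*n2) - n0)/(n0^2-n1^2-n2^2))"
  have "{t. \<exists>w\<in>space X. sub3 (Phi X w) (Phi X p) = scl3 t n} \<subseteq> {0, c}"
  proof
    fix t assume "t \<in> {t. \<exists>w\<in>space X. sub3 (Phi X w) (Phi X p) = scl3 t n}"
    then obtain w where w: "w \<in> space X" and e: "sub3 (Phi X w) (Phi X p) = scl3 t n" by auto
    obtain W0 W1 W2 where WW: "Phi X w = (W0,W1,W2)" by (cases "Phi X w") auto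
    from e have W: "W0 = P0 + t*n0" "W1 = P1 + t*n1" "W2 = P2 + t*n2" unfolding WW PP nn by auto
    show "t \<in> {0, c}"
    proof (cases X)
      case Euclidean
      have "P0 = P1^2+P2^2" using quadE PP Euclidean by blast
      moreover have "W0 = W1^2+W2^2" using quadE WW Euclidean by blast
      ultimately show ?thesis using quad_lineE[of P0 P1 P2 t n0 n1 n2] W n nn Euclidean c_def by auto
    next
      case Hyperbolic
      have "P0^2-P1^2-P2^2 = P0" using quadH PP Hyperbolic p by auto
      moreover have "W0^2-W1^2-W2^2 = W0" using quadH WW Hyperbolic w by auto
      ultimately show ?thesis using quad_lineH[of P0 P1 P2 t n0 n1 n2] W n nn Hyperbolic c_def by auto
    qed
  qed
  then show ?thesis by (rule finite_subset) simp
qed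


lemma exists_p:
  assumes n: "n \<noteq> (0,0,0)"
  shows "\<exists>p\<in>space X. dot3 (Lf X p) n \<noteq> 0"
proof -
  obtain n0 n1 n2 where nn: "n = (n0,n1,n2)" by (cases n) auto
  have sp: "0 \<in> space X" "1/2 \<in> space X" "\<i>/2 \<in> space X" by (cases X; simp)+
  show ?thesis
  proof (rule ccontr)
    assume "\<not> ?thesis"
    then have z: "dot3 (Lf X 0) n = 0" "dot3 (Lf X (1/2)) n = 0" "dot3 (Lf X (\<i>/2)) n = 0"
      using sp by auto
    then have "n0 = 0 \<and> n1 = 0 \<and> n2 = 0"
      by (cases X) (auto simp: nn)
    then show False using n nn by simp
  qed
qed

lemma cross_nonzero:
  assumes u: "u \<in> space X" and v: "v \<in> space X" and uv: "u \<noteq> v"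
  shows "crs3 (Lf X u) (Lf X v) \<noteq> (0,0,0)"
proof
  assume c: "crs3 (Lf X u) (Lf X v) = (0,0,0)"
  show False
  proof (cases X)
    case Euclidean
    then have "Re u = Re v" "Im u = Im v" using c by auto
    then show False using uv by (simp add: complex_eq_iff)
  next
    case Hyperbolic
    define A where "A = 1 + (cmod u)^2"
    define B where "B = 1 + (cmod v)^2"
    have e1: "B * Re u = A * Re v" and e2: "B * Im u = A * Im v"
      using c Hyperbolic unfolding A_def B_def by (auto simp: algebra_simps)
    have "B^2 * (cmod u)^2 = A^2 * (cmod v)^2"
    proof -
      have "B^2 * (cmod u)^2 = (B * Re u)^2 + (B*Im u)^2" by (simp add: cmod_power2 power_mult_distrib algebra_simps)
      also have "\<dots> = (A * Re v)^2 + (A*Im v)^2" using e1 e2 by simp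
      also have "\<dots> = A^2 * (cmod v)^2" by (simp add: cmod_power2 power_mult_distrib algebra_simps)
      finally show ?thesis .
    qed
    then have "(B * cmod u)^2 = (A * cmod v)^2" by (simp add: power_mult_distrib)
    moreover have "B * cmod u \<ge> 0" "A * cmod v \<ge> 0" unfolding A_def B_def by simp_all
    ultimately have f: "B * cmod u = A * cmod v" using power2_eq_iff_nonneg by blast
    have cu: "cmod u < 1" and cv: "cmod v < 1" using u v Hyperbolic by auto
    have "(cmod u - cmod v) * (1 - cmod u * cmod v) = 0"
      using f unfolding A_def B_def by (simp add: algebra_simps power2_eq_square)
    moreover have "cmod u * cmod v < 1"
    proof -
      have "cmod u * cmod v \<le> cmod u * 1" using cv by (intro mult_left_mono) auto
      then show ?thesis using cu by simp
    qed
    ultimately have "cmod u = cmod v" by simp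
    then have "A = B" unfolding A_def B_def by simp
    moreover have "A > 0" unfolding A_def by (simp add: add_pos_nonneg)
    ultimately have "Re u = Re v" "Im u = Im v" using e1 e2 by auto
    then show False using uv by (simp add: complex_eq_iff)
  qed
qed

lemma gdist_pos:
  assumes "x \<in> space X" "y \<in> space X" "x \<noteq> y"
  shows "gdist X y x > 0"
proof (cases X)
  case Euclidean
  then show ?thesis using assms by simp
next
  case Hyperbolic
  have sx: "1 - (cmod x)^2 > 0" using assms Hyperbolic by (simp add: abs_square_less_1)
  have sy: "1 - (cmod y)^2 > 0" using assms Hyperbolic by (simp add: abs_square_less_1)
  have "cmod (y - x) > 0" using assms by simp
  then have "2 * (cmod (y - x))\<^sup>2 / ((1 - (cmod y)\<^sup>2) * (1 - (cmod x)\<^sup>2)) > 0"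
    using sx sy by simp
  then show ?thesis using Hyperbolic assms sx sy by (simp add: hyp_dist_def)
qed

lemma gdist_self: "x \<in> space X \<Longrightarrow> gdist X x x = 0"
  by (cases X) (simp_all add: hyp_dist_def)

lemma finite_min_pos:
  assumes "finite A" "\<forall>y\<in>A. (0::real) < f y"
  shows "\<exists>e>0. \<forall>y\<in>A. e \<le> f y"
  using assms
proof (induction A rule: finite_induct)
  case empty
  then show ?case by (auto intro: exI[of _ 1])
next
  case (insert a A)
  then obtain e where e: "e > 0" "\<forall>y\<in>A. e \<le> f y" by auto
  show ?case using insert e by (intro exI[of _ "min e (f a)"]) auto
qed

lemma nbhd:
  assumes x: "x \<in> space X"
  shows "\<exists>K e. compact K \<and> K \<subseteq> space X \<and> e > 0 \<and> (\<forall>y\<in>space X. gdist X y x < e \<longrightarrow> y \<in> K)"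
proof (cases X)
  case Euclidean
  show ?thesis
    by (rule exI[of _ "cball x 1"], rule exI[of _ 1]) (auto simp: Euclidean dist_commute)
next
  case Hyperbolic
  have cx: "cmod x < 1" using x Hyperbolic by simp
  define r where "r = (1 - cmod x)/2"
  have r: "r > 0" using cx unfolding r_def by simp
  have sx: "1 - (cmod x)^2 > 0" using cx by (simp add: abs_square_less_1)
  define e where "e = arcosh (1 + 2 * r^2 / (1 - (cmod x)^2))"
  have arg: "1 + 2 * r^2 / (1 - (cmod x)^2) > 1" using r sx by simp
  have e: "e > 0" unfolding e_def using arg r sx by simp
  have K: "cball x r \<subseteq> space X"
  proof
    fix y assume "y \<in> cball x r"
    then have "cmod (y - x) \<le> r" by (simp add: dist_norm norm_minus_commute)
    moreover have "cmod y \<le> cmod x + cmod (y - x)" by (metis add.commute diff_add_cancel norm_triangle_ineq)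
    ultimately have "cmod y < 1" using cx unfolding r_def by simp
    then show "y \<in> space X" using Hyperbolic by simp
  qed
  have "\<forall>y\<in>space X. gdist X y x < e \<longrightarrow> y \<in> cball x r"
  proof (intro ballI impI)
    fix y assume y: "y \<in> space X" and d: "gdist X y x < e"
    have sy: "1 - (cmod y)^2 > 0" using y Hyperbolic by (simp add: abs_square_less_1)
    have sy1: "1 - (cmod y)^2 \<le> 1" by simp
    have "arcosh (1 + 2 * (cmod (y - x))\<^sup>2 / ((1 - (cmod y)\<^sup>2) * (1 - (cmod x)\<^sup>2))) < arcosh (1 + 2 * r^2 / (1 - (cmod x)^2))"
      using d Hyperbolic unfolding e_def by (simp add: hyp_dist_def)
    then have lt: "2 * (cmod (y - x))\<^sup>2 / ((1 - (cmod y)\<^sup>2) * (1 - (cmod x)\<^sup>2)) < 2 * r^2 / (1 - (cmod x)^2)"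
      using sx sy arg by (subst (asm) arcosh_less_iff_real) auto
    have "2 * (cmod (y - x))\<^sup>2 / (1 - (cmod x)\<^sup>2) \<le> 2 * (cmod (y - x))\<^sup>2 / ((1 - (cmod y)\<^sup>2) * (1 - (cmod x)\<^sup>2))"
      using sx sy sy1 by (intro divide_left_mono) (auto intro: mult_pos_pos simp: mult_le_cancel_right1)
    with lt have "2 * (cmod (y - x))\<^sup>2 / (1 - (cmod x)\<^sup>2) < 2 * r^2 / (1 - (cmod x)^2)" by linarith
    then have "(cmod (y - x))\<^sup>2 < r^2" using sx by (simp add: divide_strict_right_mono_neg divide_less_cancel)
    then have "cmod (y - x) < r" using r by (simp add: power2_less_imp_less)
    then show "y \<in> cball x r" by (simp add: dist_norm norm_minus_commute)
  qed
  then show ?thesis using K e by (intro exI[of _ "cball x r"] exI[of _ e]) auto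
qed

lemma vertex_sep:
  assumes lf: "locally_finite_vertices X V" and x: "x \<in> space X" and VS: "V \<subseteq> space X"
  shows "\<exists>e>0. \<forall>y\<in>V. gdist X y x < e \<longrightarrow> y = x"
proof -
  obtain K e0 where K: "compact K" "K \<subseteq> space X" "e0 > 0" and Kp: "\<forall>y\<in>space X. gdist X y x < e0 \<longrightarrow> y \<in> K"
    using nbhd[OF x] by blast
  have "finite (K \<inter> V)" using lf K(1,2) unfolding locally_finite_vertices_def by blast
  then have fin: "finite (K \<inter> V - {x})" by (rule finite_subset[rotated]) blast
  have "\<forall>y\<in>K \<inter> V - {x}. 0 < gdist X y x"
  proof
    fix y assume y: "y \<in> K \<inter> V - {x}"
    then have "y \<in> space X" "y \<noteq> x" using VS by auto
    then show "0 < gdist X y x" using gdist_pos[where X=X and x=x and y=y] x by simp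
  qed
  then obtain e1 where e1: "e1 > 0" "\<forall>y\<in>K \<inter> V - {x}. e1 \<le> gdist X y x"
    using finite_min_pos[OF fin, of "\<lambda>y. gdist X y x"] by auto
  show ?thesis
  proof (intro exI[of _ "min e0 e1"] conjI ballI impI)
    show "min e0 e1 > 0" using e1 K by simp
    fix y assume y: "y \<in> V" and d: "gdist X y x < min e0 e1"
    have "gdist X y x < e0" using d by simp
    then have "y \<in> K" using Kp VS y by auto
    show "y = x"
    proof (rule ccontr)
      assume "y \<noteq> x"
      then have "y \<in> K \<inter> V - {x}" using \<open>y \<in> K\<close> y by blast
      then have "e1 \<le> gdist X y x" using e1(2) by blast
      then show False using d by linarith
    qed
  qed
qed


fun add3 :: "v3 \<Rightarrow> v3 \<Rightarrow> v3" where
  "add3 (a0,a1,a2) (b0,b1,b2) = (a0+b0, a1+b1, a2+b2)"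

lemma sub3_eq_iff: "sub3 y P = q \<longleftrightarrow> y = add3 P q"
  by (cases y; cases P; cases q) auto

lemma dot3_scl3: "dot3 a (scl3 c n) = c * dot3 a n"
  by (cases a; cases n) (simp add: algebra_simps)

lemma isometry_space: "isometry X g \<Longrightarrow> x \<in> space X \<Longrightarrow> g x \<in> space X"
  unfolding isometry_def bij_betw_def by auto

lemma isometry_dist: "isometry X g \<Longrightarrow> x \<in> space X \<Longrightarrow> y \<in> space X \<Longrightarrow> gdist X (g x) (g y) = gdist X x y"
  unfolding isometry_def by auto

lemma isometry_inj: "isometry X g \<Longrightarrow> inj g"
proof (rule injI)
  fix x y assume g: "isometry X g" and e: "g x = g y"
  have ij: "inj_on g (space X)" and im: "g ` space X = space X" and out: "\<forall>x. x \<notin> space X \<longrightarrow> g x = x"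
    using g unfolding isometry_def bij_betw_def by auto
  show "x = y"
  proof (cases "x \<in> space X"; cases "y \<in> space X")
    assume "x \<in> space X" "y \<in> space X" then show ?thesis using ij e by (auto dest: inj_onD)
  next
    assume "x \<in> space X" "y \<notin> space X"
    then have "g x \<in> space X" "g y = y" using im out by auto
    then show ?thesis using e \<open>y \<notin> space X\<close> by simp
  next
    assume "x \<notin> space X" "y \<in> space X"
    then have "g y \<in> space X" "g x = x" using im out by auto
    then show ?thesis using e \<open>x \<notin> space X\<close> by simp
  next
    assume "x \<notin> space X" "y \<notin> space X" then show ?thesis using out e by simp
  qed
qed

lemma rigid_aux:
  assumes u: "u \<in> space X" and v: "v \<in> space X" and p: "p \<in> space X"
    and n: "crs3 (Lf X u) (Lf X v) \<noteq> (0,0,0)"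
    and np: "dot3 (Lf X p) (crs3 (Lf X u) (Lf X v)) \<noteq> 0"
    and z: "z \<in> space X" and w: "w \<in> space X"
    and du: "gdist X w u = gdist X z u" and dv: "gdist X w v = gdist X z v" and dp: "gdist X w p = gdist X z p"
  shows "w = z"
proof -
  let ?n = "crs3 (Lf X u) (Lf X v)"
  let ?D = "sub3 (Phi X w) (Phi X z)"
  have a: "dot3 (Lf X u) ?D = 0" by (rule P1[OF u z w du])
  have b: "dot3 (Lf X v) ?D = 0" by (rule P1[OF v z w dv])
  have c: "dot3 (Lf X p) ?D = 0" by (rule P1[OF p z w dp])
  define c0 where "c0 = dot3 ?n ?D / dot3 ?n ?n"
  have D: "?D = scl3 c0 ?n" unfolding c0_def by (rule kernel[OF a b n])
  have "c0 * dot3 (Lf X p) ?n = 0" using c unfolding D dot3_scl3 .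
  then have "c0 = 0" using np by simp
  then have "?D = (0,0,0)" using D by (cases "?n") simp
  then have "Phi X w = Phi X z" by (cases "Phi X w"; cases "Phi X z") simp
  then show "w = z" using Phi_inj[of X] w z by (auto dest: inj_onD)
qed

lemma finite_S:
  assumes u: "u \<in> space X" and v: "v \<in> space X" and p: "p \<in> space X"
    and n: "crs3 (Lf X u) (Lf X v) \<noteq> (0,0,0)"
  shows "finite {w \<in> space X. gdist X w u = gdist X p u \<and> gdist X w v = gdist X p v}"
    (is "finite ?S")
proof -
  let ?n = "crs3 (Lf X u) (Lf X v)"
  let ?T = "{t. \<exists>w\<in>space X. sub3 (Phi X w) (Phi X p) = scl3 t ?n}"
  have fT: "finite ?T" by (rule finite_line[OF n p])
  have "Phi X ` ?S \<subseteq> (\<lambda>t. add3 (Phi X p) (scl3 t ?n)) ` ?T"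
  proof
    fix y assume "y \<in> Phi X ` ?S"
    then obtain w where w: "w \<in> space X" "gdist X w u = gdist X p u" "gdist X w v = gdist X p v" and y: "y = Phi X w" by auto
    let ?D = "sub3 (Phi X w) (Phi X p)"
    have a: "dot3 (Lf X u) ?D = 0" by (rule P1[OF u p w(1) w(2)])
    have b: "dot3 (Lf X v) ?D = 0" by (rule P1[OF v p w(1) w(3)])
    define c0 where "c0 = dot3 ?n ?D / dot3 ?n ?n"
    have D: "?D = scl3 c0 ?n" unfolding c0_def by (rule kernel[OF a b n])
    then have "c0 \<in> ?T" using w(1) by blast
    moreover have "y = add3 (Phi X p) (scl3 c0 ?n)" using D y by (simp add: sub3_eq_iff)
    ultimately show "y \<in> (\<lambda>t. add3 (Phi X p) (scl3 t ?n)) ` ?T" by blast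
  qed
  then have "finite (Phi X ` ?S)" using finite_imageI[OF fT] by (rule finite_subset)
  moreover have "inj_on (Phi X) ?S" using Phi_inj[of X] by (rule inj_on_subset) auto
  ultimately show ?thesis by (rule finite_imageD)
qed


theorem lemma2p4:
  fixes X :: geometry and V :: "complex set" and E :: "complex set set"
    and G :: "(complex \<Rightarrow> complex) set"
  assumes "is_map X V E"
    and "locally_finite_graph V E"
    and "one_ended V E"
    and "locally_finite_vertices X V"
    and "isom_subgroup X G"
    and "quasi_transitive G V E"
  shows "discrete_isom_group X G"
proof -
  have VS: "V \<subseteq> space X" and infV: "infinite V" using assms(1) unfolding is_map_def by auto
  have lf: "locally_finite_vertices X V" by fact
  have isoG: "\<And>g. g \<in> G \<Longrightarrow> isometry X g" and compG: "\<And>g h. g \<in> G \<Longrightarrow> h \<in> G \<Longrightarrow> g \<circ> h \<in> G"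
    and invG: "\<And>g. g \<in> G \<Longrightarrow> \<exists>h\<in>G. h \<circ> g = id"
    using assms(5) unfolding isom_subgroup_def by auto
  have actV: "\<And>g. g \<in> G \<Longrightarrow> g ` V = V" using assms(6) unfolding quasi_transitive_def acts_on_map_def by auto
  obtain u where u: "u \<in> V" using infV by (metis finite.emptyI ex_in_conv)
  have "infinite (V - {u})" using infV by simp
  then obtain v where v: "v \<in> V" "v \<noteq> u" by (metis Diff_iff ex_in_conv finite.emptyI insertI1)
  have us: "u \<in> space X" and vs: "v \<in> space X" using u v VS by auto
  define n where "n = crs3 (Lf X u) (Lf X v)"
  have n: "n \<noteq> (0,0,0)" unfolding n_def using cross_nonzero[OF us vs] v(2) by auto
  obtain p where ps: "p \<in> space X" and np: "dot3 (Lf X p) n \<noteq> 0" using exists_p[OF n] by blast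
  define S where "S = {w \<in> space X. gdist X w u = gdist X p u \<and> gdist X w v = gdist X p v}"
  have fS: "finite S" unfolding S_def by (rule finite_S[OF us vs ps]) (use n n_def in simp)
  have "finite (S - {p})" using fS by simp
  moreover have "\<forall>w\<in>S - {p}. 0 < gdist X w p"
  proof
    fix w assume "w \<in> S - {p}"
    then have "w \<in> space X" "w \<noteq> p" unfolding S_def by auto
    then show "0 < gdist X w p" using gdist_pos[where X=X and x=p and y=w] ps by simp
  qed
  ultimately obtain ep where ep: "ep > 0" "\<forall>w\<in>S - {p}. ep \<le> gdist X w p"
    using finite_min_pos[of "S - {p}" "\<lambda>w. gdist X w p"] by auto
  show ?thesis unfolding discrete_isom_group_def
  proof
    fix g assume g: "g \<in> G"
    obtain g' where g': "g' \<in> G" "g' \<circ> g = id" using invG[OF g] by blast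
    have gi: "isometry X g" and gi': "isometry X g'" using isoG g g' by auto
    have guV: "g u \<in> V" and gvV: "g v \<in> V" using actV[OF g] u v by auto
    obtain e1 where e1: "e1 > 0" "\<forall>y\<in>V. gdist X y (g u) < e1 \<longrightarrow> y = g u"
      using vertex_sep[OF lf _ VS, of "g u"] guV VS by auto
    obtain e2 where e2: "e2 > 0" "\<forall>y\<in>V. gdist X y (g v) < e2 \<longrightarrow> y = g v"
      using vertex_sep[OF lf _ VS, of "g v"] gvV VS by auto
    define e where "e = min ep (min e1 e2)"
    have K: "compact {u, v, p}" "{u, v, p} \<subseteq> space X" using us vs ps by auto
    have "\<forall>h\<in>G. (\<forall>x\<in>{u,v,p}. gdist X (h x) (g x) < e) \<longrightarrow> h = g"
    proof (intro ballI impI)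
      fix h assume h: "h \<in> G" and cl: "\<forall>x\<in>{u,v,p}. gdist X (h x) (g x) < e"
      have hi: "isometry X h" using isoG h by auto
      have huV: "h u \<in> V" and hvV: "h v \<in> V" using actV[OF h] u v by auto
      have "h u = g u" using e1 huV cl unfolding e_def by auto
      have "h v = g v" using e2 hvV cl unfolding e_def by auto
      define f where "f = g' \<circ> h"
      have fG: "f \<in> G" unfolding f_def using compG g' h by auto
      have fi: "isometry X f" using isoG fG by auto
      have g'g: "\<And>x. g' (g x) = x" using g'(2) by (metis comp_apply id_apply)
      have fu: "f u = u" unfolding f_def using \<open>h u = g u\<close> g'g by simp
      have fv: "f v = v" unfolding f_def using \<open>h v = g v\<close> g'g by simp
      have hps: "h p \<in> space X" "g p \<in> space X" using isometry_space hi gi ps by auto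
      have "gdist X (f p) p = gdist X (g' (h p)) (g' (g p))" unfolding f_def using g'g by simp
      also have "\<dots> = gdist X (h p) (g p)" using isometry_dist[OF gi' hps] .
      finally have dfp: "gdist X (f p) p < ep" using cl unfolding e_def by auto
      have fps: "f p \<in> space X" using isometry_space[OF fi ps] .
      have "gdist X (f p) u = gdist X p u" using isometry_dist[OF fi ps us] fu by simp
      moreover have "gdist X (f p) v = gdist X p v" using isometry_dist[OF fi ps vs] fv by simp
      ultimately have "f p \<in> S" unfolding S_def using fps by simp
      have fp: "f p = p"
      proof (rule ccontr)
        assume "f p \<noteq> p"
        then have "f p \<in> S - {p}" using \<open>f p \<in> S\<close> by simp
        then have "ep \<le> gdist X (f p) p" using ep by blast
        then show False using dfp by linarith
      qed
      have fid: "\<And>z. f z = z"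
      proof -
        fix z show "f z = z"
        proof (cases "z \<in> space X")
          case True
          have fzs: "f z \<in> space X" using isometry_space[OF fi True] .
          show ?thesis
          proof (rule rigid_aux[OF us vs ps])
            show "crs3 (Lf X u) (Lf X v) \<noteq> (0,0,0)" using n n_def by simp
            show "dot3 (Lf X p) (crs3 (Lf X u) (Lf X v)) \<noteq> 0" using np n_def by simp
            show "z \<in> space X" "f z \<in> space X" by fact+
            show "gdist X (f z) u = gdist X z u" using isometry_dist[OF fi True us] fu by simp
            show "gdist X (f z) v = gdist X z v" using isometry_dist[OF fi True vs] fv by simp
            show "gdist X (f z) p = gdist X z p" using isometry_dist[OF fi True ps] fp by simp
          qed
        next
          case False
          then show ?thesis using fi unfolding isometry_def by auto
        qed
      qed
      show "h = g"
      proof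
        fix x
        have "g' (h x) = g' (g x)" using fid[of x] g'g[of x] unfolding f_def by simp
        then show "h x = g x" using isometry_inj[OF gi'] by (auto dest: injD)
      qed
    qed
    then show "\<exists>K e. compact K \<and> K \<subseteq> space X \<and> e > 0 \<and>
        (\<forall>h\<in>G. (\<forall>x\<in>K. gdist X (h x) (g x) < e) \<longrightarrow> h = g)"
      using K ep e1 e2 unfolding e_def by (intro exI[of _ "{u,v,p}"] exI[of _ e]) (auto simp: e_def)
  qed
qed

end
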